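(* Let $P,Q\in\mathbb P_d$ and $R=P^{-1}\#Q^{-1}$. Then $\operatorname{F}_R(P,Q)=\operatorname{F}^{\mathrm M}(P,Q)$.
   Context: $\mathbb P_d$ is the set of $d\times d$ complex positive definite matrices; $A\#B:=A^{1/2}(A^{-1/2}BA^{-1/2})^{1/2}A^{1/2}$ is the matrix geometric mean. The generalized fidelity is $\operatorname{F}_R(P,Q):=\operatorname{Tr}\big[\sqrt{R^{1/2}PR^{1/2}}\,R^{-1}\sqrt{R^{1/2}QR^{1/2}}\big]$, and the Matsumoto fidelity is $\operatorname{F}^{\mathrm M}(P,Q):=\operatorname{Tr}[P\#Q]$. *)

theory Defs
  imports Complex_Main "Jordan_Normal_Form.Matrix" "Jordan_Normal_Form.Conjugate"
    "Jordan_Normal_Form.Schur_Decomposition"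
begin

definition mtrace :: "complex mat \<Rightarrow> complex" where
  "mtrace A = (\<Sum>i<dim_row A. A $$ (i, i))"

definition hermitian_mat :: "complex mat \<Rightarrow> bool" where
  "hermitian_mat A \<longleftrightarrow> mat_adjoint A = A"

definition pos_def_mat :: "nat \<Rightarrow> complex mat \<Rightarrow> bool" where
  "pos_def_mat d A \<longleftrightarrow> A \<in> carrier_mat d d \<and> hermitian_mat A \<and>
     (\<forall>v \<in> carrier_vec d. v \<noteq> 0\<^sub>v d \<longrightarrow> 0 < Re (conjugate v \<bullet> (A *\<^sub>v v)))"

definition pos_semidef_mat :: "nat \<Rightarrow> complex mat \<Rightarrow> bool" where
  "pos_semidef_mat d A \<longleftrightarrow> A \<in> carrier_mat d d \<and> hermitian_mat A \<and>
     (\<forall>v \<in> carrier_vec d. 0 \<le> Re (conjugate v \<bullet> (A *\<^sub>v v)))"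

definition mat_sqrt :: "complex mat \<Rightarrow> complex mat" where
  "mat_sqrt A = (THE S. pos_semidef_mat (dim_row A) S \<and> S * S = A)"

definition mat_inv :: "complex mat \<Rightarrow> complex mat" where
  "mat_inv A = (THE B. B \<in> carrier_mat (dim_row A) (dim_row A) \<and>
                       A * B = 1\<^sub>m (dim_row A) \<and> B * A = 1\<^sub>m (dim_row A))"

definition geo_mean :: "complex mat \<Rightarrow> complex mat \<Rightarrow> complex mat" where
  "geo_mean A B = (let Ah = mat_sqrt A; Aih = mat_inv Ah in
      Ah * mat_sqrt (Aih * B * Aih) * Ah)"

definition gen_fidelity :: "complex mat \<Rightarrow> complex mat \<Rightarrow> complex mat \<Rightarrow> complex" where
  "gen_fidelity R P Q = (let Rh = mat_sqrt R in
      mtrace (mat_sqrt (Rh * P * Rh) * mat_inv R * mat_sqrt (Rh * Q * Rh)))"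

definition matsumoto_fidelity :: "complex mat \<Rightarrow> complex mat \<Rightarrow> complex" where
  "matsumoto_fidelity P Q = mtrace (geo_mean P Q)"

end

theory Submission
  imports Defs
begin


lemma adj_dims[simp]: "dim_row (mat_adjoint A) = dim_col A" "dim_col (mat_adjoint A) = dim_row A"
  unfolding mat_adjoint_def by (auto simp: mat_of_rows_def)

lemma adj_index[simp]: "i < dim_col A \<Longrightarrow> j < dim_row A \<Longrightarrow> mat_adjoint A $$ (i,j) = cnj (A $$ (j,i))"
  unfolding mat_adjoint_def by (simp add: mat_of_rows_index)

lemma adj_carrier[simp]: "A \<in> carrier_mat n m \<Longrightarrow> mat_adjoint A \<in> carrier_mat m n"
  by auto

lemma adj_adj[simp]: "mat_adjoint (mat_adjoint (A::complex mat)) = A"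
  by (rule eq_matI) auto

lemma adj_mult: assumes "(A::complex mat) \<in> carrier_mat n m" "B \<in> carrier_mat m p"
  shows "mat_adjoint (A * B) = mat_adjoint B * mat_adjoint A"
  using assms by (intro eq_matI) (auto simp: scalar_prod_def cnj_sum mult.commute)

lemma adj_one[simp]: "mat_adjoint (1\<^sub>m n :: complex mat) = 1\<^sub>m n"
  by (rule eq_matI) auto

lemma adj_zero[simp]: "mat_adjoint (0\<^sub>m n m :: complex mat) = 0\<^sub>m m n"
  by (rule eq_matI) auto

lemma adj_add: assumes "(A::complex mat) \<in> carrier_mat n m" "B \<in> carrier_mat n m"
  shows "mat_adjoint (A + B) = mat_adjoint A + mat_adjoint B"
  using assms by (intro eq_matI) auto

lemma adj_minus: assumes "(A::complex mat) \<in> carrier_mat n m" "B \<in> carrier_mat n m"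
  shows "mat_adjoint (A - B) = mat_adjoint A - mat_adjoint B"
  using assms by (intro eq_matI) auto

lemma adj_smult: "mat_adjoint (c \<cdot>\<^sub>m (A::complex mat)) = cnj c \<cdot>\<^sub>m mat_adjoint A"
  by (intro eq_matI) auto

lemma adj_vec: assumes "(A::complex mat) \<in> carrier_mat n m" "v \<in> carrier_vec n" "w \<in> carrier_vec m"
  shows "conjugate v \<bullet> (A *\<^sub>v w) = conjugate (mat_adjoint A *\<^sub>v v) \<bullet> w"
proof -
  have "conjugate v \<bullet> (A *\<^sub>v w) = (\<Sum>i<n. cnj (v $ i) * (\<Sum>j<m. A $$ (i,j) * w $ j))"
    using assms by (auto simp: scalar_prod_def lessThan_atLeast0)
  also have "\<dots> = (\<Sum>i<n. \<Sum>j<m. cnj (v $ i) * A $$ (i,j) * w $ j)"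
    by (simp add: sum_distrib_left mult.assoc)
  also have "\<dots> = (\<Sum>j<m. \<Sum>i<n. cnj (v $ i) * A $$ (i,j) * w $ j)"
    by (rule sum.swap)
  also have "\<dots> = conjugate (mat_adjoint A *\<^sub>v v) \<bullet> w"
    using assms by (auto simp: scalar_prod_def lessThan_atLeast0 sum_distrib_left sum_distrib_right mult.commute mult.left_commute intro!: sum.cong)
  finally show ?thesis .
qed

lemma herm_carrier: "hermitian_mat A \<Longrightarrow> dim_row A = dim_col A"
  unfolding hermitian_mat_def by (metis adj_dims(1))

lemma herm_index: "hermitian_mat A \<Longrightarrow> i < dim_row A \<Longrightarrow> j < dim_row A \<Longrightarrow> A $$ (i,j) = cnj (A $$ (j,i))"
  unfolding hermitian_mat_def by (metis adj_dims(1) adj_dims(2) adj_index)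

lemma hermI: "A \<in> carrier_mat n n \<Longrightarrow> (\<And>i j. i < n \<Longrightarrow> j < n \<Longrightarrow> A $$ (i,j) = cnj (A $$ (j,i))) \<Longrightarrow> hermitian_mat A"
  unfolding hermitian_mat_def
proof (intro eq_matI)
  fix i j assume "A \<in> carrier_mat n n" "\<And>i j. i < n \<Longrightarrow> j < n \<Longrightarrow> A $$ (i,j) = cnj (A $$ (j,i))"
    "i < dim_row A" "j < dim_col A"
  then show "mat_adjoint A $$ (i, j) = A $$ (i, j)" by (metis adj_index carrier_matD(1) carrier_matD(2) complex_cnj_cnj)
qed auto

lemma herm_vec: assumes "hermitian_mat A" "A \<in> carrier_mat n n" "v \<in> carrier_vec n" "w \<in> carrier_vec n"
  shows "conjugate v \<bullet> (A *\<^sub>v w) = conjugate (A *\<^sub>v v) \<bullet> w"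
  using adj_vec[OF assms(2-4)] assms(1) unfolding hermitian_mat_def by simp

lemma cself_eq: "v \<in> carrier_vec n \<Longrightarrow> conjugate v \<bullet> (v::complex vec) = v \<bullet>c v"
  by (metis conjugate_vec_sprod_comm)

lemma cself_ge0: "v \<in> carrier_vec n \<Longrightarrow> 0 \<le> conjugate v \<bullet> (v::complex vec)"
  using cself_eq conjugate_square_ge_0_vec by metis

lemma cself_zero: "v \<in> carrier_vec n \<Longrightarrow> conjugate v \<bullet> (v::complex vec) = 0 \<longleftrightarrow> v = 0\<^sub>v n"
  by (simp add: cself_eq)

lemma cself_real: "v \<in> carrier_vec n \<Longrightarrow> conjugate v \<bullet> (v::complex vec) = of_real (Re (conjugate v \<bullet> v))"
  using cself_ge0 by (metis complex_eq_iff less_eq_complex_def zero_complex.simps(2) Im_complex_of_real Re_complex_of_real)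



lemma pow_carrier: "A \<in> carrier_mat n n \<Longrightarrow> A ^\<^sub>m k \<in> carrier_mat n n"
  by (induct k) auto

lemma pow_add: assumes "(A::complex mat) \<in> carrier_mat n n"
  shows "A ^\<^sub>m (k + l) = A ^\<^sub>m k * A ^\<^sub>m l"
proof (induct l)
  case 0 then show ?case using assms pow_carrier[OF assms, of k] by simp
next
  case (Suc l)
  have "A ^\<^sub>m (k + Suc l) = A ^\<^sub>m (k + l) * A" by simp
  also have "\<dots> = A ^\<^sub>m k * A ^\<^sub>m l * A" using Suc by simp
  also have "\<dots> = A ^\<^sub>m k * (A ^\<^sub>m l * A)"
    using pow_carrier[OF assms] assms by (meson assoc_mult_mat)
  finally show ?case by simp
qed

lemma strict_ut_pow:
  assumes T: "(T::complex mat) \<in> carrier_mat n n"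
    and z: "\<And>i j. i < n \<Longrightarrow> j < n \<Longrightarrow> j \<le> i \<Longrightarrow> T $$ (i,j) = 0"
  shows "i < n \<Longrightarrow> j < n \<Longrightarrow> j < i + k \<Longrightarrow> (T ^\<^sub>m k) $$ (i,j) = 0"
proof (induct k arbitrary: i j)
  case 0 then show ?case using T by auto
next
  case (Suc k)
  have c: "T ^\<^sub>m k \<in> carrier_mat n n" using pow_carrier[OF T] .
  have "(T ^\<^sub>m Suc k) $$ (i,j) = (\<Sum>l = 0..<n. (T ^\<^sub>m k) $$ (i,l) * T $$ (l,j))"
    using Suc.prems c T by (auto simp: scalar_prod_def)
  also have "\<dots> = 0"
  proof (rule sum.neutral, intro ballI)
    fix l assume l: "l \<in> {0..<n}"
    show "(T ^\<^sub>m k) $$ (i,l) * T $$ (l,j) = 0"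
    proof (cases "l < i + k")
      case True then show ?thesis using Suc l by auto
    next
      case False then show ?thesis using Suc.prems l z by auto
    qed
  qed
  finally show ?case .
qed

lemma strict_ut_nilp:
  assumes T: "(T::complex mat) \<in> carrier_mat n n"
    and z: "\<And>i j. i < n \<Longrightarrow> j < n \<Longrightarrow> j \<le> i \<Longrightarrow> T $$ (i,j) = 0"
  shows "T ^\<^sub>m n = 0\<^sub>m n n"
  using strict_ut_pow[OF T z] pow_carrier[OF T, of n] by (intro eq_matI) auto

lemma herm_sq_zero: assumes h: "hermitian_mat A" and A: "A \<in> carrier_mat n n"
  and z: "A * A = 0\<^sub>m n n"
  shows "A = 0\<^sub>m n n"
proof (rule eq_matI)
  fix i j assume i: "i < dim_row (0\<^sub>m n n :: complex mat)" and j: "j < dim_col (0\<^sub>m n n :: complex mat)"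
  have "(A * A) $$ (i,i) = (\<Sum>l = 0..<n. A $$ (i,l) * A $$ (l,i))"
    using A i by (auto simp: scalar_prod_def)
  also have "\<dots> = (\<Sum>l = 0..<n. of_real ((cmod (A $$ (i,l)))^2))"
  proof (intro sum.cong refl)
    fix l assume l: "l \<in> {0..<n}"
    have "A $$ (l,i) = cnj (A $$ (i,l))" using herm_index[OF h, of l i] A i l by auto
    then show "A $$ (i,l) * A $$ (l,i) = of_real ((cmod (A $$ (i,l)))^2)"
      using complex_norm_square[of "A $$ (i,l)"] by simp
  qed
  also have "\<dots> = of_real (\<Sum>l = 0..<n. (cmod (A $$ (i,l)))^2)" by (simp only: of_real_sum)
  finally have e: "(A * A) $$ (i,i) = of_real (\<Sum>l = 0..<n. (cmod (A $$ (i,l)))^2)" .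
  have "(A * A) $$ (i,i) = 0" using z i by simp
  then have "(\<Sum>l = 0..<n. (cmod (A $$ (i,l)))^2) = 0" using e by (metis of_real_eq_0_iff)
  then have "\<forall>l\<in>{0..<n}. (cmod (A $$ (i,l)))^2 = 0"
    by (subst sum_nonneg_eq_0_iff[symmetric]) auto
  then show "A $$ (i,j) = 0\<^sub>m n n $$ (i,j)" using i j by auto
qed (use A in auto)

lemma herm_pow: assumes h: "hermitian_mat A" and A: "A \<in> carrier_mat n n"
  shows "hermitian_mat (A ^\<^sub>m k)"
proof (induct k)
  case 0 then show ?case using A unfolding hermitian_mat_def by simp
next
  case (Suc k)
  have "mat_adjoint (A ^\<^sub>m k * A) = mat_adjoint A * mat_adjoint (A ^\<^sub>m k)"
    using adj_mult[OF pow_carrier[OF A] A] .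
  also have "\<dots> = A * A ^\<^sub>m k" using Suc h unfolding hermitian_mat_def by simp
  also have "\<dots> = A ^\<^sub>m (1 + k)" using pow_add[OF A, of 1 k] A by simp
  also have "\<dots> = A ^\<^sub>m k * A" by (simp add: add.commute)
  finally show ?case unfolding hermitian_mat_def by simp
qed

lemma herm_nilp: assumes h: "hermitian_mat A" and A: "A \<in> carrier_mat n n"
  shows "A ^\<^sub>m (Suc k) = 0\<^sub>m n n \<Longrightarrow> A = 0\<^sub>m n n"
proof (induct k rule: less_induct)
  case (less k)
  show ?case
  proof (cases k)
    case 0 then show ?thesis using less A by simp
  next
    case (Suc k')
    define h' where "h' = (k + 2) div 2"
    have h1: "h' \<ge> 1" "h' \<le> k" "2 * h' \<ge> Suc k" using Suc unfolding h'_def by auto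
    have "A ^\<^sub>m h' * A ^\<^sub>m h' = A ^\<^sub>m (Suc k + (2*h' - Suc k))"
      using pow_add[OF A, of h' h'] h1 by (simp add: mult_2)
    also have "\<dots> = A ^\<^sub>m (Suc k) * A ^\<^sub>m (2*h' - Suc k)" using pow_add[OF A] by blast
    also have "\<dots> = 0\<^sub>m n n" using less.prems pow_carrier[OF A, of "2*h' - Suc k"] by (simp add: left_mult_zero_mat)
    finally have "A ^\<^sub>m h' = 0\<^sub>m n n" using herm_sq_zero[OF herm_pow[OF h A] pow_carrier[OF A]] by blast
    moreover have "h' = Suc (h' - 1)" "h' - 1 < k" using h1 by auto
    ultimately show ?thesis using less.hyps by metis
  qed
qed

lemma herm_nz_eig:
  assumes h: "hermitian_mat H" and H: "H \<in> carrier_mat n n" and nz: "H \<noteq> 0\<^sub>m n n"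
  shows "\<exists>\<mu> v. \<mu> \<noteq> 0 \<and> eigenvector H v \<mu>"
proof (rule ccontr)
  assume ne: "\<not> ?thesis"
  obtain es where es: "char_poly H = (\<Prod>a\<leftarrow>es. [:- a, 1:])" "length es = n"
    using char_poly_factorized[OF H] by blast
  obtain T P Q where sd: "schur_decomposition H es = (T,P,Q)" by (cases "schur_decomposition H es") auto
  from schur_decomposition[OF H es(1) sd] have sim: "similar_mat_wit H T P Q"
    and ut: "upper_triangular T" and dg: "diag_mat T = es" by auto
  note simD = similar_mat_witD2[OF H sim]
  have es0: "e = 0" if e: "e \<in> set es" for e
  proof -
    have "poly (char_poly H) e = 0" unfolding es(1) using e
      by (induct es) (auto simp: poly_prod_list)
    then have "eigenvalue H e" using eigenvalue_root_char_poly[OF H] by simp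
    then show ?thesis using ne unfolding eigenvalue_def by blast
  qed
  have Tz: "T $$ (i,j) = 0" if "i < n" "j < n" "j \<le> i" for i j
  proof (cases "j = i")
    case True
    have "T $$ (i,i) \<in> set (diag_mat T)" using that simD(5) unfolding diag_mat_def by auto
    then show ?thesis using True es0 dg by auto
  next
    case False then show ?thesis using ut that simD(5) unfolding upper_triangular_def by auto
  qed
  have Tn: "T ^\<^sub>m n = 0\<^sub>m n n" using strict_ut_nilp[OF simD(5) Tz] by blast
  have "H ^\<^sub>m n = P * T ^\<^sub>m n * Q" using similar_mat_wit_pow_id[OF sim] .
  also have "\<dots> = 0\<^sub>m n n" using Tn simD by simp
  finally have Hn: "H ^\<^sub>m n = 0\<^sub>m n n" .
  show False
  proof (cases n)
    case 0
    have "H = 0\<^sub>m n n" using H 0 by (intro eq_matI) auto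
    then show False using nz by simp
  next
    case (Suc k) then show False using herm_nilp[OF h H, of k] Hn nz by simp
  qed
qed



lemma mtrace_comm: assumes "(A::complex mat) \<in> carrier_mat n m" "B \<in> carrier_mat m n"
  shows "mtrace (A * B) = mtrace (B * A)"
proof -
  have "mtrace (A * B) = (\<Sum>i<n. \<Sum>l<m. A $$ (i,l) * B $$ (l,i))"
    using assms unfolding mtrace_def by (auto simp: scalar_prod_def lessThan_atLeast0)
  also have "\<dots> = (\<Sum>l<m. \<Sum>i<n. B $$ (l,i) * A $$ (i,l))"
    by (subst sum.swap) (simp add: mult.commute)
  also have "\<dots> = mtrace (B * A)"
    using assms unfolding mtrace_def by (auto simp: scalar_prod_def lessThan_atLeast0)
  finally show ?thesis .
qed

lemma mtrace_one[simp]: "mtrace (1\<^sub>m n :: complex mat) = of_nat n"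
  unfolding mtrace_def by simp

lemma mtrace_zero[simp]: "mtrace (0\<^sub>m n n :: complex mat) = 0"
  unfolding mtrace_def by simp

lemma mtrace_minus: assumes "(A::complex mat) \<in> carrier_mat n n" "B \<in> carrier_mat n n"
  shows "mtrace (A - B) = mtrace A - mtrace B"
  using assms unfolding mtrace_def by (simp add: sum_subtractf)

definition diagm :: "nat \<Rightarrow> (nat \<Rightarrow> real) \<Rightarrow> complex mat" where
  "diagm k f = mat k k (\<lambda>(i,j). if i = j then of_real (f i) else 0)"

lemma diagm_carrier[simp]: "diagm k f \<in> carrier_mat k k" unfolding diagm_def by auto
lemma diagm_dims[simp]: "dim_row (diagm k f) = k" "dim_col (diagm k f) = k" unfolding diagm_def by auto

lemma mult_diagm_index: assumes "X \<in> carrier_mat n k" "i < n" "j < k"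
  shows "(X * diagm k f) $$ (i,j) = X $$ (i,j) * of_real (f j)"
proof -
  have "(X * diagm k f) $$ (i,j) = (\<Sum>l = 0..<k. X $$ (i,l) * (if l = j then of_real (f j) else 0))"
    using assms by (auto simp: scalar_prod_def diagm_def intro!: sum.cong)
  also have "\<dots> = (\<Sum>l = 0..<k. if l = j then X $$ (i,l) * of_real (f j) else 0)"
    by (intro sum.cong) auto
  also have "\<dots> = X $$ (i,j) * of_real (f j)" using assms by simp
  finally show ?thesis .
qed

lemma diagm_mult_index: assumes "X \<in> carrier_mat k n" "i < k" "j < n"
  shows "(diagm k f * X) $$ (i,j) = of_real (f i) * X $$ (i,j)"
proof -
  have "(diagm k f * X) $$ (i,j) = (\<Sum>l = 0..<k. (if i = l then of_real (f i) else 0) * X $$ (l,j))"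
    using assms by (auto simp: scalar_prod_def diagm_def intro!: sum.cong)
  also have "\<dots> = (\<Sum>l = 0..<k. if l = i then of_real (f i) * X $$ (i,j) else 0)"
    by (intro sum.cong) auto
  also have "\<dots> = of_real (f i) * X $$ (i,j)" using assms by simp
  finally show ?thesis .
qed

lemma adj_diagm[simp]: "mat_adjoint (diagm k f) = diagm k f"
  by (intro eq_matI) (auto simp: diagm_def)

lemma herm_diagm: "hermitian_mat (diagm k f)"
  unfolding hermitian_mat_def by simp

definition ortho_eig :: "nat \<Rightarrow> complex mat \<Rightarrow> complex vec list \<Rightarrow> (nat \<Rightarrow> real) \<Rightarrow> bool" where
  "ortho_eig n A vs lam \<longleftrightarrow> (\<forall>i<length vs. vs!i \<in> carrier_vec n \<and> A *\<^sub>v vs!i = of_real (lam i) \<cdot>\<^sub>v vs!i) \<and>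
     (\<forall>i<length vs. \<forall>j<length vs. conjugate (vs!i) \<bullet> vs!j = (if i = j then 1 else 0))"

lemma conj_sprod_swap: assumes "u \<in> carrier_vec n" "v \<in> carrier_vec n"
  shows "conjugate u \<bullet> (v::complex vec) = cnj (conjugate v \<bullet> u)"
  using assms by (auto simp: scalar_prod_def cnj_sum mult.commute intro!: sum.cong)

lemma ortho_V: assumes oe: "ortho_eig n A vs lam"
  defines "V \<equiv> mat_of_cols n vs"
  shows "V \<in> carrier_mat n (length vs)" "mat_adjoint V * V = 1\<^sub>m (length vs)"
    "\<And>j. j < length vs \<Longrightarrow> col V j = vs ! j"
proof -
  show V: "V \<in> carrier_mat n (length vs)" unfolding V_def by auto
  show cV: "\<And>j. j < length vs \<Longrightarrow> col V j = vs ! j"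
    using oe unfolding V_def ortho_eig_def by (intro eq_vecI) (auto simp: mat_of_cols_index)
  show "mat_adjoint V * V = 1\<^sub>m (length vs)"
  proof (rule eq_matI)
    fix i j assume ij: "i < dim_row (1\<^sub>m (length vs) :: complex mat)" "j < dim_col (1\<^sub>m (length vs) :: complex mat)"
    have "(mat_adjoint V * V) $$ (i,j) = (\<Sum>l = 0..<n. cnj (V $$ (l,i)) * V $$ (l,j))"
      using V ij by (auto simp: scalar_prod_def)
    also have "\<dots> = conjugate (vs!i) \<bullet> vs!j"
    proof -
      have vi: "vs!i \<in> carrier_vec n" "vs!j \<in> carrier_vec n" using oe ij unfolding ortho_eig_def by auto
      then show ?thesis using ij unfolding V_def by (auto simp: scalar_prod_def mat_of_cols_index intro!: sum.cong)
    qed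
    also have "\<dots> = 1\<^sub>m (length vs) $$ (i,j)" using oe ij unfolding ortho_eig_def by auto
    finally show "(mat_adjoint V * V) $$ (i,j) = 1\<^sub>m (length vs) $$ (i,j)" .
  qed (use V in auto)
qed

lemma ortho_AV: assumes oe: "ortho_eig n A vs lam" and A: "A \<in> carrier_mat n n"
  defines "V \<equiv> mat_of_cols n vs"
  shows "A * V = V * diagm (length vs) lam"
proof -
  note V = ortho_V[OF oe, folded V_def]
  show ?thesis
  proof (rule eq_matI)
    fix i j assume ij: "i < dim_row (V * diagm (length vs) lam)" "j < dim_col (V * diagm (length vs) lam)"
    then have ij': "i < n" "j < length vs" using V by auto
    have "(A * V) $$ (i,j) = (A *\<^sub>v vs!j) $ i" using ij' A V by auto
    also have "\<dots> = of_real (lam j) * vs!j $ i" using oe ij' A unfolding ortho_eig_def by auto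
    also have "\<dots> = (V * diagm (length vs) lam) $$ (i,j)"
      using mult_diagm_index[OF V(1) ij'] ij' unfolding V_def by (simp add: mat_of_cols_index)
    finally show "(A * V) $$ (i,j) = (V * diagm (length vs) lam) $$ (i,j)" .
  qed (use A V in auto)
qed



lemma smult_mat_vec: "v \<in> carrier_vec (dim_col A) \<Longrightarrow> (k \<cdot>\<^sub>m (A::complex mat)) *\<^sub>v v = k \<cdot>\<^sub>v (A *\<^sub>v v)"
  by (intro eq_vecI) (auto simp: scalar_prod_def sum_distrib_left mult.assoc intro!: sum.cong)

lemma mat_vec_zero: "(A::complex mat) \<in> carrier_mat n m \<Longrightarrow> A *\<^sub>v 0\<^sub>v m = 0\<^sub>v n"
  by (intro eq_vecI) (auto simp: scalar_prod_def)

lemma zero_mat_vec: "(v::complex vec) \<in> carrier_vec m \<Longrightarrow> 0\<^sub>m n m *\<^sub>v v = 0\<^sub>v n"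
  by (intro eq_vecI) (auto simp: scalar_prod_def)

lemma ev_ortho:
  assumes h: "hermitian_mat A" and A: "A \<in> carrier_mat n n" and oe: "ortho_eig n A vs lam"
    and k: "length vs < n"
  shows "\<exists>w l. w \<in> carrier_vec n \<and> A *\<^sub>v w = of_real l \<cdot>\<^sub>v w \<and> conjugate w \<bullet> w = 1 \<and>
     (\<forall>i<length vs. conjugate (vs!i) \<bullet> w = 0)"
proof -
  define k where "k = length vs"
  define V where "V = mat_of_cols n vs"
  define Vh where "Vh = mat_adjoint V"
  define D where "D = diagm k lam"
  note VV = ortho_V[OF oe, folded V_def k_def]
  have V: "V \<in> carrier_mat n k" and Vh: "Vh \<in> carrier_mat k n" and D: "D \<in> carrier_mat k k"
    using VV unfolding Vh_def D_def by auto
  have F1: "Vh * V = 1\<^sub>m k" using VV unfolding Vh_def by simp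
  have F2: "A * V = V * D" using ortho_AV[OF oe A] unfolding V_def D_def k_def .
  have F3: "Vh * A = D * Vh"
  proof -
    have "Vh * A = mat_adjoint (A * V)" unfolding Vh_def using adj_mult[OF A V] h
      unfolding hermitian_mat_def by simp
    also have "\<dots> = mat_adjoint (V * D)" using F2 by simp
    also have "\<dots> = D * Vh" unfolding Vh_def D_def using adj_mult[OF V diagm_carrier] by simp
    finally show ?thesis .
  qed
  define Pi where "Pi = 1\<^sub>m n - V * Vh"
  have Pi: "Pi \<in> carrier_mat n n" unfolding Pi_def using V Vh by auto
  have F4: "Pi * A = A * Pi"
  proof -
    have "Pi * A = A - V * Vh * A" unfolding Pi_def using V Vh A
      by (simp add: minus_mult_distrib_mat[of _ n n _ _ n])
    also have "V * Vh * A = V * (D * Vh)" using V Vh A F3 by (simp add: assoc_mult_mat[of V n k Vh n A n])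
    also have "\<dots> = (V * D) * Vh" using V D Vh by (simp add: assoc_mult_mat[of V n k D k Vh n])
    also have "\<dots> = A * V * Vh" using F2 by simp
    also have "\<dots> = A * (V * Vh)" using V Vh A by (simp add: assoc_mult_mat[of A n n V k Vh n])
    finally show ?thesis unfolding Pi_def using V Vh A by (simp add: mult_minus_distrib_mat[of _ n n _ n])
  qed
  have F5: "Vh * Pi = 0\<^sub>m k n"
  proof -
    have "Vh * Pi = Vh - Vh * (V * Vh)" unfolding Pi_def using V Vh
      by (simp add: mult_minus_distrib_mat[of _ k n _ n])
    also have "Vh * (V * Vh) = Vh * V * Vh" using V Vh by (simp add: assoc_mult_mat[of Vh k n V k Vh n])
    also have "\<dots> = Vh" using F1 Vh by simp
    finally show ?thesis using Vh by simp
  qed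
  have F6': "mat_adjoint (V * Vh) = V * Vh" using adj_mult[OF V Vh] unfolding Vh_def by simp
  have F6: "mat_adjoint Pi = Pi" unfolding Pi_def using V Vh F6'
    by (simp add: adj_minus[of _ n n])
  have VVh: "V * Vh \<in> carrier_mat n n" using V Vh by simp
  have F7: "mtrace Pi = of_nat n - of_nat k"
  proof -
    have "mtrace Pi = mtrace (1\<^sub>m n) - mtrace (V * Vh)" unfolding Pi_def
      using mtrace_minus[OF one_carrier_mat VVh] .
    also have "mtrace (V * Vh) = mtrace (Vh * V)" using mtrace_comm[OF V Vh] .
    also have "\<dots> = of_nat k" unfolding F1 by simp
    finally show ?thesis by simp
  qed
  have Pinz: "Pi \<noteq> 0\<^sub>m n n"
  proof
    assume "Pi = 0\<^sub>m n n"
    then have "(of_nat n :: complex) = of_nat k" using F7 by simp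
    then show False using k unfolding k_def by simp
  qed
  define B where "B = (\<lambda>c::real. Pi * A + of_real c \<cdot>\<^sub>m Pi)"
  have Bc: "B c \<in> carrier_mat n n" for c unfolding B_def using Pi A by auto
  have Bh: "hermitian_mat (B c)" for c
  proof -
    have "mat_adjoint (B c) = mat_adjoint (Pi * A) + mat_adjoint (of_real c \<cdot>\<^sub>m Pi)"
      unfolding B_def using Pi A by (intro adj_add[of _ n n]) auto
    also have "mat_adjoint (Pi * A) = Pi * A" using adj_mult[OF Pi A] h F6 F4
      unfolding hermitian_mat_def by simp
    also have "mat_adjoint (of_real c \<cdot>\<^sub>m Pi) = of_real c \<cdot>\<^sub>m Pi" using F6 by (simp add: adj_smult)
    finally show ?thesis unfolding hermitian_mat_def B_def .
  qed
  obtain c where cnz: "B c \<noteq> 0\<^sub>m n n"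
  proof (cases "B 0 = 0\<^sub>m n n")
    case True
    have "B 1 = B 0 + Pi" unfolding B_def using Pi A by (intro eq_matI) auto
    then have "B 1 \<noteq> 0\<^sub>m n n" using True Pinz Pi by simp
    then show ?thesis using that by blast
  next
    case False then show ?thesis using that by blast
  qed
  obtain \<mu> x where mu: "\<mu> \<noteq> 0" and ev: "eigenvector (B c) x \<mu>"
    using herm_nz_eig[OF Bh Bc cnz] by blast
  have x: "x \<in> carrier_vec n" "x \<noteq> 0\<^sub>v n" and Bx: "B c *\<^sub>v x = \<mu> \<cdot>\<^sub>v x"
    using ev Bc[of c] unfolding eigenvector_def by auto
  have VhB: "Vh * B c = 0\<^sub>m k n"
  proof -
    have "Vh * B c = Vh * (Pi * A) + Vh * (of_real c \<cdot>\<^sub>m Pi)" unfolding B_def using Vh Pi A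
      by (simp add: mult_add_distrib_mat[of _ k n _ n])
    also have "Vh * (Pi * A) = (Vh * Pi) * A" using Vh Pi A by (simp add: assoc_mult_mat[of Vh k n Pi n A n])
    also have "Vh * (of_real c \<cdot>\<^sub>m Pi) = of_real c \<cdot>\<^sub>m (Vh * Pi)" using Vh Pi by (simp add: mult_smult_distrib)
    finally show ?thesis using F5 A by simp
  qed
  have Vhx: "Vh *\<^sub>v x = 0\<^sub>v k"
  proof -
    have "\<mu> \<cdot>\<^sub>v (Vh *\<^sub>v x) = Vh *\<^sub>v (B c *\<^sub>v x)" using Bx Vh x by (simp add: mult_mat_vec)
    also have "\<dots> = (Vh * B c) *\<^sub>v x" using assoc_mult_mat_vec[OF Vh Bc[of c] x(1)] by simp
    also have "\<dots> = 0\<^sub>v k" using VhB zero_mat_vec[OF x(1)] by simp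
    finally have e: "\<mu> \<cdot>\<^sub>v (Vh *\<^sub>v x) = 0\<^sub>v k" .
    show ?thesis
    proof (rule eq_vecI)
      fix i assume "i < dim_vec (0\<^sub>v k :: complex vec)"
      then show "(Vh *\<^sub>v x) $ i = 0\<^sub>v k $ i" using arg_cong[OF e, of "\<lambda>v. v $ i"] mu Vh by auto
    qed (use Vh in auto)
  qed
  have Pix: "Pi *\<^sub>v x = x"
  proof -
    have "Pi *\<^sub>v x = 1\<^sub>m n *\<^sub>v x - (V * Vh) *\<^sub>v x" unfolding Pi_def
      using minus_mult_distrib_mat_vec[OF one_carrier_mat VVh x(1)] .
    also have "(V * Vh) *\<^sub>v x = V *\<^sub>v (Vh *\<^sub>v x)" using assoc_mult_mat_vec[OF V Vh x(1)] .
    also have "\<dots> = 0\<^sub>v n" using Vhx mat_vec_zero[OF V] by simp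
    finally show ?thesis using x by (intro eq_vecI) auto
  qed
  define m where "m = \<mu> - of_real c"
  have Ax: "A *\<^sub>v x = m \<cdot>\<^sub>v x"
  proof -
    have xP: "x \<in> carrier_vec (dim_col Pi)" using x Pi by simp
    have "B c *\<^sub>v x = (Pi * A) *\<^sub>v x + (of_real c \<cdot>\<^sub>m Pi) *\<^sub>v x" unfolding B_def
      using add_mult_distrib_mat_vec[of "Pi * A" n n "of_real c \<cdot>\<^sub>m Pi" x] Pi A x by simp
    also have "(of_real c \<cdot>\<^sub>m Pi) *\<^sub>v x = of_real c \<cdot>\<^sub>v (Pi *\<^sub>v x)" using smult_mat_vec[OF xP] .
    also have "(Pi * A) *\<^sub>v x = A *\<^sub>v (Pi *\<^sub>v x)" using F4 assoc_mult_mat_vec[OF A Pi x(1)] by simp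
    finally have eq: "\<mu> \<cdot>\<^sub>v x = A *\<^sub>v x + of_real c \<cdot>\<^sub>v x" using Pix Bx by simp
    show ?thesis
    proof (rule eq_vecI)
      fix i assume i: "i < dim_vec (m \<cdot>\<^sub>v x)"
      then have i': "i < n" using x by simp
      have "(\<mu> \<cdot>\<^sub>v x) $ i = (A *\<^sub>v x + of_real c \<cdot>\<^sub>v x) $ i" using eq by simp
      then have "\<mu> * x $ i = (A *\<^sub>v x) $ i + of_real c * x $ i" using i' A x by simp
      then show "(A *\<^sub>v x) $ i = (m \<cdot>\<^sub>v x) $ i" using i' x unfolding m_def by (simp add: algebra_simps)
    qed (use A x in auto)
  qed
  have xx: "conjugate x \<bullet> x \<noteq> 0" using cself_zero[OF x(1)] x(2) by simp
  define r where "r = Re m"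
  have mreal: "m = of_real r"
  proof -
    have "conjugate x \<bullet> (A *\<^sub>v x) = conjugate (A *\<^sub>v x) \<bullet> x" using herm_vec[OF h A x(1) x(1)] .
    then have "m * (conjugate x \<bullet> x) = cnj m * (conjugate x \<bullet> x)"
      using Ax x by (simp add: conjugate_smult_vec)
    then have "m = cnj m" using xx by simp
    then show ?thesis unfolding r_def by (metis Reals_cnj_iff complex_is_Real_iff of_real_Re)
  qed
  define s where "s = Re (conjugate x \<bullet> x)"
  have sx: "conjugate x \<bullet> x = of_real s" using cself_real[OF x(1)] unfolding s_def .
  have s0: "0 \<le> s" using cself_ge0[OF x(1)] sx by (simp add: less_eq_complex_def)
  have s1: "s \<noteq> 0" using xx sx by auto
  have s: "s > 0" using s0 s1 by simp
  define w where "w = of_real (1 / sqrt s) \<cdot>\<^sub>v x"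
  have w: "w \<in> carrier_vec n" unfolding w_def using x by simp
  have "A *\<^sub>v w = of_real (1 / sqrt s) \<cdot>\<^sub>v (A *\<^sub>v x)" unfolding w_def using mult_mat_vec[OF A x(1)] .
  also have "\<dots> = of_real (1 / sqrt s) \<cdot>\<^sub>v (of_real r \<cdot>\<^sub>v x)" using Ax mreal by simp
  also have "\<dots> = of_real r \<cdot>\<^sub>v w" unfolding w_def by (intro eq_vecI) auto
  finally have Aw: "A *\<^sub>v w = of_real r \<cdot>\<^sub>v w" .
  moreover have ww: "conjugate w \<bullet> w = 1"
  proof -
    have "conjugate w \<bullet> w = of_real (1/sqrt s) * (of_real (1/sqrt s) * (conjugate x \<bullet> x))"
      unfolding w_def using x by (simp add: conjugate_smult_vec)
    also have "\<dots> = of_real ((1/sqrt s) * (1/sqrt s) * s)" unfolding sx of_real_mult by (simp only: mult.assoc)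
    also have "(1/sqrt s) * (1/sqrt s) * s = 1" using s by (simp add: field_simps)
    finally show ?thesis by simp
  qed
  moreover have wo: "\<forall>i<length vs. conjugate (vs!i) \<bullet> w = 0"
  proof (intro allI impI)
    fix i assume i: "i < length vs"
    have vi: "vs ! i \<in> carrier_vec n" using oe i unfolding ortho_eig_def by auto
    have "conjugate (vs!i) \<bullet> x = (Vh *\<^sub>v x) $ i"
      using i x vi V unfolding Vh_def k_def V_def
      by (auto simp: scalar_prod_def mat_of_cols_index intro!: sum.cong)
    also have "\<dots> = 0" using Vhx i unfolding k_def by simp
    finally show "conjugate (vs!i) \<bullet> w = 0" unfolding w_def using x vi by simp
  qed
  show ?thesis
    by (rule exI[of _ w], rule exI[of _ r]) (intro conjI w Aw ww wo)
qed



lemma ortho_exists: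
  assumes h: "hermitian_mat A" and A: "A \<in> carrier_mat n n"
  shows "k \<le> n \<Longrightarrow> \<exists>vs lam. length vs = k \<and> ortho_eig n A vs lam"
proof (induct k)
  case 0 show ?case by (rule exI[of _ "[]"]) (auto simp: ortho_eig_def)
next
  case (Suc k)
  then obtain vs lam where vs: "length vs = k" "ortho_eig n A vs lam" by auto
  from ev_ortho[OF h A vs(2)] Suc.prems vs(1) obtain w l where w: "w \<in> carrier_vec n"
    "A *\<^sub>v w = of_real l \<cdot>\<^sub>v w" "conjugate w \<bullet> w = 1" "\<forall>i<length vs. conjugate (vs!i) \<bullet> w = 0"
    by auto
  define vs' where "vs' = vs @ [w]"
  define lam' where "lam' = lam(k := l)"
  have len: "length vs' = Suc k" unfolding vs'_def using vs(1) by simp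
  have nth: "vs' ! i = (if i < k then vs ! i else w)" if "i < Suc k" for i
    using vs(1) that unfolding vs'_def by (auto simp: nth_append)
  have vc: "vs ! i \<in> carrier_vec n" if "i < k" for i using vs that unfolding ortho_eig_def by auto
  have p1: "\<forall>i<length vs'. vs'!i \<in> carrier_vec n \<and> A *\<^sub>v vs'!i = of_real (lam' i) \<cdot>\<^sub>v vs'!i"
  proof (intro allI impI)
    fix i assume i: "i < length vs'"
    then have i': "i < Suc k" using len by simp
    show "vs'!i \<in> carrier_vec n \<and> A *\<^sub>v vs'!i = of_real (lam' i) \<cdot>\<^sub>v vs'!i"
    proof (cases "i < k")
      case True then show ?thesis using vs nth[OF i'] unfolding ortho_eig_def lam'_def by auto
    next
      case False then have "i = k" using i' by simp
      then show ?thesis using w nth[OF i'] unfolding lam'_def by auto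
    qed
  qed
  have p2: "\<forall>i<length vs'. \<forall>j<length vs'. conjugate (vs'!i) \<bullet> vs'!j = (if i = j then 1 else 0)"
  proof (intro allI impI)
    fix i j assume i: "i < length vs'" and j: "j < length vs'"
    then have i': "i < Suc k" and j': "j < Suc k" using len by auto
    show "conjugate (vs'!i) \<bullet> vs'!j = (if i = j then 1 else 0)"
    proof (cases "i < k")
      case True note ti = this
      show ?thesis
      proof (cases "j < k")
        case True then show ?thesis using ti vs nth[OF i'] nth[OF j'] unfolding ortho_eig_def by auto
      next
        case False then have "j = k" using j' by simp
        then show ?thesis using ti w nth[OF i'] nth[OF j'] vs(1) by auto
      qed
    next
      case False then have ik: "i = k" using i' by simp
      show ?thesis
      proof (cases "j < k")
        case True
        have "conjugate w \<bullet> vs ! j = cnj (conjugate (vs!j) \<bullet> w)"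
          using conj_sprod_swap[OF w(1) vc[OF True]] .
        then show ?thesis using True ik w nth[OF i'] nth[OF j'] vs(1) by auto
      next
        case False then have "j = k" using j' by simp
        then show ?thesis using ik w nth[OF i'] nth[OF j'] by auto
      qed
    qed
  qed
  have "ortho_eig n A vs' lam'" unfolding ortho_eig_def using p1 p2 by blast
  then show ?case using len by (intro exI[of _ vs'] exI[of _ lam']) simp
qed

lemma spectral:
  assumes h: "hermitian_mat A" and A: "A \<in> carrier_mat n n"
  shows "\<exists>U lam. U \<in> carrier_mat n n \<and> mat_adjoint U * U = 1\<^sub>m n \<and> U * mat_adjoint U = 1\<^sub>m n \<and>
     A * U = U * diagm n lam \<and> A = U * diagm n lam * mat_adjoint U"
proof -
  obtain vs lam where vs: "length vs = n" "ortho_eig n A vs lam" using ortho_exists[OF h A le_refl] by auto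
  define U where "U = mat_of_cols n vs"
  note VV = ortho_V[OF vs(2), folded U_def, unfolded vs(1)]
  have U: "U \<in> carrier_mat n n" and UhU: "mat_adjoint U * U = 1\<^sub>m n" using VV by auto
  have UUh: "U * mat_adjoint U = 1\<^sub>m n" using mat_mult_left_right_inverse[OF adj_carrier[OF U] U UhU] .
  have AU: "A * U = U * diagm n lam" using ortho_AV[OF vs(2) A, folded U_def] vs(1) by simp
  have "A = A * (U * mat_adjoint U)" using A UUh by simp
  also have "\<dots> = (A * U) * mat_adjoint U" using assoc_mult_mat[OF A U adj_carrier[OF U]] by simp
  finally have AA: "A = U * diagm n lam * mat_adjoint U" using AU by simp
  show ?thesis by (rule exI[of _ U], rule exI[of _ lam], intro conjI; fact)
qed

lemma diagm_cong: "(\<And>i. i < n \<Longrightarrow> f i = g i) \<Longrightarrow> diagm n f = diagm n g"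
  unfolding diagm_def by (intro eq_matI) auto

lemma diagm_mult: "diagm n f * diagm n g = diagm n (\<lambda>i. f i * g i)"
proof (rule eq_matI)
  fix i j assume ij: "i < dim_row (diagm n (\<lambda>i. f i * g i))" "j < dim_col (diagm n (\<lambda>i. f i * g i))"
  then have "(diagm n f * diagm n g) $$ (i,j) = of_real (f i) * diagm n g $$ (i,j)"
    using diagm_mult_index[OF diagm_carrier, of i n j f g] by simp
  then show "(diagm n f * diagm n g) $$ (i,j) = diagm n (\<lambda>i. f i * g i) $$ (i,j)"
    using ij by (simp add: diagm_def)
qed auto

lemma diagm_one: "(\<And>i. i < n \<Longrightarrow> f i = 1) \<Longrightarrow> diagm n f = 1\<^sub>m n"
  unfolding diagm_def by (intro eq_matI) auto

lemma diagm_vec: "y \<in> carrier_vec n \<Longrightarrow> diagm n f *\<^sub>v y = vec n (\<lambda>i. of_real (f i) * y $ i)"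
proof (intro eq_vecI)
  fix i assume y: "y \<in> carrier_vec n" and i: "i < dim_vec (vec n (\<lambda>i. complex_of_real (f i) * y $ i))"
  have "(diagm n f *\<^sub>v y) $ i = (\<Sum>j = 0..<n. (if i = j then of_real (f i) else 0) * y $ j)"
    using y i by (auto simp: scalar_prod_def diagm_def intro!: sum.cong)
  also have "\<dots> = (\<Sum>j = 0..<n. if j = i then of_real (f i) * y $ i else 0)" by (intro sum.cong) auto
  also have "\<dots> = of_real (f i) * y $ i" using i by simp
  finally show "(diagm n f *\<^sub>v y) $ i = vec n (\<lambda>i. complex_of_real (f i) * y $ i) $ i" using i by simp
qed auto

lemma udu_carrier: "U \<in> carrier_mat n n \<Longrightarrow> U * diagm n f * mat_adjoint U \<in> carrier_mat n n"
  by (metis adj_carrier diagm_carrier mult_carrier_mat)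

lemma udu_mult: assumes U: "U \<in> carrier_mat n n" and UhU: "mat_adjoint U * U = 1\<^sub>m n"
  shows "(U * diagm n f * mat_adjoint U) * (U * diagm n g * mat_adjoint U) = U * diagm n (\<lambda>i. f i * g i) * mat_adjoint U"
proof -
  define Uh where "Uh = mat_adjoint U"
  have Uh: "Uh \<in> carrier_mat n n" using U unfolding Uh_def by simp
  define F where "F = diagm n f"
  define G where "G = diagm n g"
  have F: "F \<in> carrier_mat n n" and G: "G \<in> carrier_mat n n" unfolding F_def G_def by auto
  have UF: "U * F \<in> carrier_mat n n" using U F by simp
  have "(U * F * Uh) * (U * G * Uh) = (U * F) * (Uh * (U * G * Uh))"
    using assoc_mult_mat[OF UF Uh, of "U * G * Uh" n] U G Uh by simp
  also have "Uh * (U * G * Uh) = (Uh * U) * (G * Uh)"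
    using U G Uh by (simp add: assoc_mult_mat[of _ n n _ n _ n])
  also have "\<dots> = G * Uh" using UhU G Uh unfolding Uh_def by simp
  also have "(U * F) * (G * Uh) = U * (F * G) * Uh"
    using U F G Uh by (simp add: assoc_mult_mat[of _ n n _ n _ n])
  finally show ?thesis unfolding F_def G_def Uh_def diagm_mult .
qed

lemma udu_herm: assumes U: "U \<in> carrier_mat n n"
  shows "hermitian_mat (U * diagm n f * mat_adjoint U)"
proof -
  have "mat_adjoint (U * diagm n f * mat_adjoint U) = mat_adjoint (mat_adjoint U) * mat_adjoint (U * diagm n f)"
    using adj_mult[of "U * diagm n f" n n "mat_adjoint U" n] U by simp
  also have "mat_adjoint (U * diagm n f) = diagm n f * mat_adjoint U"
    using adj_mult[OF U diagm_carrier] by simp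
  also have "mat_adjoint (mat_adjoint U) * (diagm n f * mat_adjoint U) = U * diagm n f * mat_adjoint U"
    using U by (simp add: assoc_mult_mat[of _ n n _ n _ n])
  finally show ?thesis unfolding hermitian_mat_def .
qed

lemma udu_quad: assumes U: "U \<in> carrier_mat n n" and v: "v \<in> carrier_vec n"
  shows "conjugate v \<bullet> ((U * diagm n f * mat_adjoint U) *\<^sub>v v) =
     of_real (\<Sum>i<n. f i * (cmod ((mat_adjoint U *\<^sub>v v) $ i))^2)"
proof -
  define y where "y = mat_adjoint U *\<^sub>v v"
  have y: "y \<in> carrier_vec n" unfolding y_def using mult_mat_vec_carrier[OF adj_carrier[OF U] v] .
  have UD: "U * diagm n f \<in> carrier_mat n n" using U by (metis diagm_carrier mult_carrier_mat)
  have "(U * diagm n f * mat_adjoint U) *\<^sub>v v = (U * diagm n f) *\<^sub>v y"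
    unfolding y_def using assoc_mult_mat_vec[OF UD adj_carrier[OF U] v] .
  also have "\<dots> = U *\<^sub>v (diagm n f *\<^sub>v y)" using assoc_mult_mat_vec[OF U diagm_carrier y] .
  finally have "(U * diagm n f * mat_adjoint U) *\<^sub>v v = U *\<^sub>v (diagm n f *\<^sub>v y)" .
  then have "conjugate v \<bullet> ((U * diagm n f * mat_adjoint U) *\<^sub>v v) = conjugate y \<bullet> (diagm n f *\<^sub>v y)"
    using adj_vec[OF U v mult_mat_vec_carrier[OF diagm_carrier y]] unfolding y_def by simp
  also have "\<dots> = (\<Sum>i<n. cnj (y $ i) * (of_real (f i) * y $ i))"
    using y by (simp add: diagm_vec scalar_prod_def lessThan_atLeast0)
  also have "\<dots> = (\<Sum>i<n. of_real (f i * (cmod (y $ i))^2))"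
  proof (intro sum.cong refl)
    fix i
    have "cnj (y $ i) * (of_real (f i) * y $ i) = of_real (f i) * (y $ i * cnj (y $ i))" by simp
    also have "y $ i * cnj (y $ i) = of_real ((cmod (y $ i))^2)" using complex_norm_square[of "y $ i"] by simp
    finally show "cnj (y $ i) * (of_real (f i) * y $ i) = of_real (f i * (cmod (y $ i))^2)" by simp
  qed
  also have "\<dots> = of_real (\<Sum>i<n. f i * (cmod (y $ i))^2)" by simp
  finally show ?thesis unfolding y_def .
qed

lemma udu_psd: assumes U: "U \<in> carrier_mat n n" and f: "\<And>i. i < n \<Longrightarrow> f i \<ge> 0"
  shows "pos_semidef_mat n (U * diagm n f * mat_adjoint U)"
  unfolding pos_semidef_mat_def
proof (intro conjI ballI)
  fix v :: "complex vec" assume v: "v \<in> carrier_vec n"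
  show "0 \<le> Re (conjugate v \<bullet> ((U * diagm n f * mat_adjoint U) *\<^sub>v v))"
    unfolding udu_quad[OF U v] using f by (auto intro!: sum_nonneg)
qed (use U udu_herm[OF U] in auto)

lemma udu_pd: assumes U: "U \<in> carrier_mat n n" and UUh: "U * mat_adjoint U = 1\<^sub>m n"
  and f: "\<And>i. i < n \<Longrightarrow> f i > 0"
  shows "pos_def_mat n (U * diagm n f * mat_adjoint U)"
  unfolding pos_def_mat_def
proof (intro conjI ballI impI)
  fix v :: "complex vec" assume v: "v \<in> carrier_vec n" and nz: "v \<noteq> 0\<^sub>v n"
  define y where "y = mat_adjoint U *\<^sub>v v"
  have "U *\<^sub>v y = v" unfolding y_def using U v UUh
    by (metis adj_carrier assoc_mult_mat_vec one_mult_mat_vec)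
  then have "y \<noteq> 0\<^sub>v n" using nz mat_vec_zero[OF U] by auto
  moreover have y: "y \<in> carrier_vec n" unfolding y_def using mult_mat_vec_carrier[OF adj_carrier[OF U] v] .
  ultimately obtain i where i: "i < n" "y $ i \<noteq> 0" by (metis eq_vecI carrier_vecD index_zero_vec(1,2))
  have "0 < f i * (cmod (y $ i))^2" using f[OF i(1)] i(2) by simp
  also have "\<dots> \<le> (\<Sum>i<n. f i * (cmod (y $ i))^2)"
  proof (rule member_le_sum)
    fix x assume "x \<in> {..<n} - {i}"
    then have "0 < f x" using f by auto
    then show "0 \<le> f x * (cmod (y $ x))^2" by simp
  qed (use i(1) in auto)
  finally show "0 < Re (conjugate v \<bullet> ((U * diagm n f * mat_adjoint U) *\<^sub>v v))"
    unfolding udu_quad[OF U v] y_def by simp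
qed (use U udu_herm[OF U] in auto)



lemma pd_herm: "pos_def_mat d A \<Longrightarrow> hermitian_mat A" unfolding pos_def_mat_def by auto
lemma pd_carrier: "pos_def_mat d A \<Longrightarrow> A \<in> carrier_mat d d" unfolding pos_def_mat_def by auto
lemma psd_herm: "pos_semidef_mat d A \<Longrightarrow> hermitian_mat A" unfolding pos_semidef_mat_def by auto
lemma psd_carrier: "pos_semidef_mat d A \<Longrightarrow> A \<in> carrier_mat d d" unfolding pos_semidef_mat_def by auto

lemma pd_psd: assumes "pos_def_mat d A" shows "pos_semidef_mat d A"
  unfolding pos_semidef_mat_def
proof (intro conjI ballI)
  fix v :: "complex vec" assume v: "v \<in> carrier_vec d"
  show "0 \<le> Re (conjugate v \<bullet> (A *\<^sub>v v))"
  proof (cases "v = 0\<^sub>v d")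
    case True
    have "A *\<^sub>v v = 0\<^sub>v d" using True mat_vec_zero[OF pd_carrier[OF assms]] by simp
    then show ?thesis using True by simp
  next
    case False then show ?thesis using assms v unfolding pos_def_mat_def by (auto intro: less_imp_le)
  qed
qed (use assms in \<open>auto simp: pos_def_mat_def\<close>)

lemma col_diagm: assumes "X \<in> carrier_mat n k" "i < k"
  shows "col (X * diagm k f) i = of_real (f i) \<cdot>\<^sub>v col X i"
proof (rule eq_vecI)
  fix j assume j: "j < dim_vec (of_real (f i) \<cdot>\<^sub>v col X i)"
  then have j': "j < n" using assms by simp
  have "col (X * diagm k f) i $ j = (X * diagm k f) $$ (j,i)" using j' assms by simp
  also have "\<dots> = X $$ (j,i) * of_real (f i)" using mult_diagm_index[OF assms(1) j' assms(2)] .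
  finally show "col (X * diagm k f) i $ j = (of_real (f i) \<cdot>\<^sub>v col X i) $ j" using j' assms by simp
qed (use assms in auto)

lemma decomp_col: assumes U: "U \<in> carrier_mat n n" and UhU: "mat_adjoint U * U = 1\<^sub>m n"
  and A: "A \<in> carrier_mat n n" and AU: "A * U = U * diagm n lam" and i: "i < n"
  shows "col U i \<in> carrier_vec n" "A *\<^sub>v col U i = of_real (lam i) \<cdot>\<^sub>v col U i"
    "conjugate (col U i) \<bullet> col U i = 1"
proof -
  show "col U i \<in> carrier_vec n" using U by (simp add: carrier_vecI)
  have "A *\<^sub>v col U i = col (A * U) i" using col_mult2[OF A U i] by simp
  also have "\<dots> = of_real (lam i) \<cdot>\<^sub>v col U i" unfolding AU using col_diagm[OF U i] .
  finally show "A *\<^sub>v col U i = of_real (lam i) \<cdot>\<^sub>v col U i" .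
  have "(mat_adjoint U * U) $$ (i,i) = conjugate (col U i) \<bullet> col U i"
    using U i by (auto simp: scalar_prod_def intro!: sum.cong)
  then show "conjugate (col U i) \<bullet> col U i = 1" using UhU i by simp
qed

lemma pd_decomp: assumes pd: "pos_def_mat d A"
  shows "\<exists>U lam. U \<in> carrier_mat d d \<and> mat_adjoint U * U = 1\<^sub>m d \<and> U * mat_adjoint U = 1\<^sub>m d \<and>
     A * U = U * diagm d lam \<and> A = U * diagm d lam * mat_adjoint U \<and> (\<forall>i<d. lam i > 0)"
proof -
  have A: "A \<in> carrier_mat d d" and h: "hermitian_mat A" using pd unfolding pos_def_mat_def by auto
  obtain U lam where U: "U \<in> carrier_mat d d" "mat_adjoint U * U = 1\<^sub>m d" "U * mat_adjoint U = 1\<^sub>m d"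
    "A * U = U * diagm d lam" "A = U * diagm d lam * mat_adjoint U"
    using spectral[OF h A] by blast
  have "lam i > 0" if i: "i < d" for i
  proof -
    note c = decomp_col[OF U(1,2) A U(4) i]
    have "col U i \<noteq> 0\<^sub>v d" using c(3) by auto
    then have "0 < Re (conjugate (col U i) \<bullet> (A *\<^sub>v col U i))" using pd c(1) unfolding pos_def_mat_def by blast
    also have "conjugate (col U i) \<bullet> (A *\<^sub>v col U i) = of_real (lam i)" using c by simp
    finally show ?thesis by simp
  qed
  then show ?thesis using U by blast
qed

lemma sqrt_col:
  assumes T: "pos_semidef_mat n T" and TT: "T * T = A" and A: "A \<in> carrier_mat n n"
    and u: "u \<in> carrier_vec n" and Au: "A *\<^sub>v u = of_real l \<cdot>\<^sub>v u" and l: "l \<ge> 0"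
  shows "T *\<^sub>v u = of_real (sqrt l) \<cdot>\<^sub>v u"
proof -
  have Tc: "T \<in> carrier_mat n n" and hT: "hermitian_mat T" using T unfolding pos_semidef_mat_def by auto
  define s where "s = sqrt l"
  have s0: "s \<ge> 0" and ss: "s * s = l" unfolding s_def using l by auto
  define Tu where "Tu = T *\<^sub>v u"
  have Tu: "Tu \<in> carrier_vec n" unfolding Tu_def using mult_mat_vec_carrier[OF Tc u] .
  define w where "w = Tu - of_real s \<cdot>\<^sub>v u"
  have w: "w \<in> carrier_vec n" unfolding w_def using Tu u by simp
  have TTu: "T *\<^sub>v Tu = A *\<^sub>v u" using assoc_mult_mat_vec[OF Tc Tc u] TT unfolding Tu_def by simp
  have Tw: "T *\<^sub>v w = (- of_real s) \<cdot>\<^sub>v w"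
  proof -
    have su: "of_real s \<cdot>\<^sub>v u \<in> carrier_vec n" using u by simp
    have "T *\<^sub>v w = T *\<^sub>v Tu - T *\<^sub>v (of_real s \<cdot>\<^sub>v u)" unfolding w_def
      using mult_minus_distrib_mat_vec[OF Tc Tu su] .
    also have "T *\<^sub>v (of_real s \<cdot>\<^sub>v u) = of_real s \<cdot>\<^sub>v Tu" using mult_mat_vec[OF Tc u] unfolding Tu_def .
    finally have e: "T *\<^sub>v w = of_real l \<cdot>\<^sub>v u - of_real s \<cdot>\<^sub>v Tu" using TTu Au by simp
    have "of_real l \<cdot>\<^sub>v u - of_real s \<cdot>\<^sub>v Tu = (- of_real s) \<cdot>\<^sub>v w"
      unfolding w_def using Tu u ss[symmetric] by (intro eq_vecI) (auto simp: algebra_simps)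
    then show ?thesis using e by simp
  qed
  have ww0: "conjugate w \<bullet> w = 0"
  proof (cases "s = 0")
    case True
    then have wT: "w = Tu" unfolding w_def using Tu u by (intro eq_vecI) auto
    have "conjugate Tu \<bullet> Tu = conjugate u \<bullet> (T *\<^sub>v Tu)" using herm_vec[OF hT Tc u Tu] unfolding Tu_def by simp
    also have "\<dots> = conjugate u \<bullet> (of_real l \<cdot>\<^sub>v u)" using TTu Au by simp
    also have "\<dots> = of_real l * (conjugate u \<bullet> u)" using u by simp
    also have "\<dots> = 0" using True ss by simp
    finally show ?thesis using wT by simp
  next
    case False then have sp: "s > 0" using s0 by simp
    have "conjugate w \<bullet> (T *\<^sub>v w) = - of_real s * (conjugate w \<bullet> w)" using Tw w by simp
    moreover have "0 \<le> Re (conjugate w \<bullet> (T *\<^sub>v w))" using T w unfolding pos_semidef_mat_def by blast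
    ultimately have "0 \<le> - s * Re (conjugate w \<bullet> w)" by simp
    then have "Re (conjugate w \<bullet> w) \<le> 0" using sp by (simp add: mult_le_0_iff)
    moreover have "0 \<le> Re (conjugate w \<bullet> w)" using cself_ge0[OF w] by (simp add: less_eq_complex_def)
    ultimately have "Re (conjugate w \<bullet> w) = 0" by simp
    then show ?thesis using cself_real[OF w] by simp
  qed
  then have w0: "w = 0\<^sub>v n" using cself_zero[OF w] by simp
  show ?thesis
  proof (rule eq_vecI)
    fix i assume i: "i < dim_vec (of_real (sqrt l) \<cdot>\<^sub>v u)"
    then have "w $ i = 0" using w0 u by simp
    then have "Tu $ i = of_real s * u $ i" unfolding w_def using i u Tu by simp
    then show "(T *\<^sub>v u) $ i = (of_real (sqrt l) \<cdot>\<^sub>v u) $ i" using i u unfolding Tu_def s_def by simp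
  qed (use Tc u in auto)
qed

lemma sqrt_unique_aux:
  assumes U: "U \<in> carrier_mat n n" and UhU: "mat_adjoint U * U = 1\<^sub>m n" and UUh: "U * mat_adjoint U = 1\<^sub>m n"
    and A: "A \<in> carrier_mat n n" and AU: "A * U = U * diagm n lam" and lam: "\<And>i. i < n \<Longrightarrow> lam i \<ge> 0"
    and T: "pos_semidef_mat n T" and TT: "T * T = A"
  shows "T = U * diagm n (\<lambda>i. sqrt (lam i)) * mat_adjoint U"
proof -
  have Tc: "T \<in> carrier_mat n n" using T unfolding pos_semidef_mat_def by auto
  have TU: "T * U = U * diagm n (\<lambda>i. sqrt (lam i))"
  proof (rule mat_col_eqI)
    fix i assume "i < dim_col (U * diagm n (\<lambda>i. sqrt (lam i)))"
    then have i: "i < n" by simp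
    note c = decomp_col[OF U UhU A AU i]
    have "col (T * U) i = T *\<^sub>v col U i" using col_mult2[OF Tc U i] .
    also have "\<dots> = of_real (sqrt (lam i)) \<cdot>\<^sub>v col U i" using sqrt_col[OF T TT A c(1) c(2) lam[OF i]] .
    also have "\<dots> = col (U * diagm n (\<lambda>i. sqrt (lam i))) i" using col_diagm[OF U i] by simp
    finally show "col (T * U) i = col (U * diagm n (\<lambda>i. sqrt (lam i))) i" .
  qed (use Tc U in auto)
  have "T = T * (U * mat_adjoint U)" using UUh Tc by simp
  also have "\<dots> = (T * U) * mat_adjoint U" using assoc_mult_mat[OF Tc U adj_carrier[OF U]] by simp
  finally show ?thesis unfolding TU .
qed

lemma mat_sqrt_props: assumes pd: "pos_def_mat d A"
  shows "pos_def_mat d (mat_sqrt A)" "mat_sqrt A * mat_sqrt A = A"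
    "\<And>S. pos_semidef_mat d S \<Longrightarrow> S * S = A \<Longrightarrow> mat_sqrt A = S"
proof -
  obtain U lam where U: "U \<in> carrier_mat d d" "mat_adjoint U * U = 1\<^sub>m d" "U * mat_adjoint U = 1\<^sub>m d"
    "A * U = U * diagm d lam" "A = U * diagm d lam * mat_adjoint U" "\<forall>i<d. lam i > 0"
    using pd_decomp[OF pd] by blast
  have A: "A \<in> carrier_mat d d" using pd_carrier[OF pd] .
  define S0 where "S0 = U * diagm d (\<lambda>i. sqrt (lam i)) * mat_adjoint U"
  have S0pd: "pos_def_mat d S0" unfolding S0_def using udu_pd[OF U(1) U(3)] U(6) by simp
  have "S0 * S0 = U * diagm d (\<lambda>i. sqrt (lam i) * sqrt (lam i)) * mat_adjoint U"
    unfolding S0_def using udu_mult[OF U(1) U(2)] .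
  also have "diagm d (\<lambda>i. sqrt (lam i) * sqrt (lam i)) = diagm d lam"
    using U(6) by (intro diagm_cong) (simp add: less_imp_le)
  finally have S0S0: "S0 * S0 = A" using U(5) by simp
  have uniq: "S = S0" if "pos_semidef_mat d S" "S * S = A" for S
    unfolding S0_def using sqrt_unique_aux[OF U(1-3) A U(4) _ that] U(6) by (simp add: less_imp_le)
  have dA: "dim_row A = d" using A by simp
  have eq: "mat_sqrt A = S0" unfolding mat_sqrt_def dA
  proof (rule the_equality)
    show "pos_semidef_mat d S0 \<and> S0 * S0 = A" using pd_psd[OF S0pd] S0S0 by simp
  next
    fix S assume "pos_semidef_mat d S \<and> S * S = A" then show "S = S0" using uniq by blast
  qed
  show "pos_def_mat d (mat_sqrt A)" using eq S0pd by simp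
  show "mat_sqrt A * mat_sqrt A = A" using eq S0S0 by simp
  show "\<And>S. pos_semidef_mat d S \<Longrightarrow> S * S = A \<Longrightarrow> mat_sqrt A = S" using eq uniq by simp
qed

lemma mat_inv_unique: assumes A: "A \<in> carrier_mat d d" and B: "B \<in> carrier_mat d d" and AB: "A * B = 1\<^sub>m d"
  shows "mat_inv A = B"
proof -
  have BA: "B * A = 1\<^sub>m d" using mat_mult_left_right_inverse[OF A B AB] .
  have dA: "dim_row A = d" using A by simp
  show ?thesis unfolding mat_inv_def dA
  proof (rule the_equality)
    show "B \<in> carrier_mat d d \<and> A * B = 1\<^sub>m d \<and> B * A = 1\<^sub>m d" using B AB BA by simp
  next
    fix C assume C: "C \<in> carrier_mat d d \<and> A * C = 1\<^sub>m d \<and> C * A = 1\<^sub>m d"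
    have Cc: "C \<in> carrier_mat d d" using C by simp
    have "C = C * (A * B)" unfolding AB using right_mult_one_mat[OF Cc] by simp
    also have "\<dots> = (C * A) * B" using assoc_mult_mat[of C d d A d B d] C A B by simp
    finally show "C = B" using C B by simp
  qed
qed

lemma mat_inv_props: assumes pd: "pos_def_mat d A"
  shows "pos_def_mat d (mat_inv A)" "A * mat_inv A = 1\<^sub>m d" "mat_inv A * A = 1\<^sub>m d"
proof -
  obtain U lam where U: "U \<in> carrier_mat d d" "mat_adjoint U * U = 1\<^sub>m d" "U * mat_adjoint U = 1\<^sub>m d"
    "A * U = U * diagm d lam" "A = U * diagm d lam * mat_adjoint U" "\<forall>i<d. lam i > 0"
    using pd_decomp[OF pd] by blast
  have A: "A \<in> carrier_mat d d" using pd_carrier[OF pd] .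
  define B where "B = U * diagm d (\<lambda>i. 1 / lam i) * mat_adjoint U"
  have Bpd: "pos_def_mat d B" unfolding B_def using udu_pd[OF U(1) U(3)] U(6) by simp
  have B: "B \<in> carrier_mat d d" using pd_carrier[OF Bpd] .
  have "A * B = U * diagm d (\<lambda>i. lam i * (1 / lam i)) * mat_adjoint U"
    unfolding B_def using udu_mult[OF U(1) U(2)] U(5) by metis
  also have "diagm d (\<lambda>i. lam i * (1 / lam i)) = 1\<^sub>m d" using U(6) by (intro diagm_one) (simp add: less_imp_neq[THEN not_sym])
  also have "U * 1\<^sub>m d * mat_adjoint U = 1\<^sub>m d" using U by simp
  finally have AB: "A * B = 1\<^sub>m d" .
  have eq: "mat_inv A = B" using mat_inv_unique[OF A B AB] .
  show "pos_def_mat d (mat_inv A)" using eq Bpd by simp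
  show "A * mat_inv A = 1\<^sub>m d" using eq AB by simp
  show "mat_inv A * A = 1\<^sub>m d" using eq mat_mult_left_right_inverse[OF A B AB] by simp
qed



lemma pd_sand: assumes C: "pos_def_mat d C" and A: "pos_def_mat d A"
  shows "pos_def_mat d (C * A * C)"
proof -
  have Cc: "C \<in> carrier_mat d d" and Ac: "A \<in> carrier_mat d d" using C A by (auto simp: pos_def_mat_def)
  have hC: "hermitian_mat C" and hA: "hermitian_mat A" using C A by (auto simp: pos_def_mat_def)
  have CA: "C * A \<in> carrier_mat d d" using Cc Ac by simp
  have CAC: "C * A * C \<in> carrier_mat d d" using CA Cc by simp
  have "mat_adjoint (C * A * C) = mat_adjoint C * mat_adjoint (C * A)" using adj_mult[OF CA Cc] .
  also have "mat_adjoint (C * A) = mat_adjoint A * mat_adjoint C" using adj_mult[OF Cc Ac] .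
  finally have "mat_adjoint (C * A * C) = C * (A * C)" using hC hA unfolding hermitian_mat_def by simp
  then have h: "hermitian_mat (C * A * C)" unfolding hermitian_mat_def using assoc_mult_mat[OF Cc Ac Cc] by simp
  note CI = mat_inv_props[OF C]
  have Ci: "mat_inv C \<in> carrier_mat d d" using pd_carrier[OF CI(1)] .
  show ?thesis unfolding pos_def_mat_def
  proof (intro conjI CAC h ballI impI)
    fix v :: "complex vec" assume v: "v \<in> carrier_vec d" and nz: "v \<noteq> 0\<^sub>v d"
    define y where "y = C *\<^sub>v v"
    have y: "y \<in> carrier_vec d" unfolding y_def using mult_mat_vec_carrier[OF Cc v] .
    have "mat_inv C *\<^sub>v y = v" unfolding y_def using assoc_mult_mat_vec[OF Ci Cc v] CI(3) v by simp
    then have ynz: "y \<noteq> 0\<^sub>v d" using nz mat_vec_zero[OF Ci] by auto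
    have Ay: "A *\<^sub>v y \<in> carrier_vec d" using mult_mat_vec_carrier[OF Ac y] .
    have "(C * A * C) *\<^sub>v v = (C * A) *\<^sub>v y" unfolding y_def using assoc_mult_mat_vec[OF CA Cc v] .
    also have "\<dots> = C *\<^sub>v (A *\<^sub>v y)" using assoc_mult_mat_vec[OF Cc Ac y] .
    finally have "conjugate v \<bullet> ((C * A * C) *\<^sub>v v) = conjugate y \<bullet> (A *\<^sub>v y)"
      using herm_vec[OF hC Cc v Ay] unfolding y_def by simp
    then show "0 < Re (conjugate v \<bullet> ((C * A * C) *\<^sub>v v))" using A y ynz unfolding pos_def_mat_def by simp
  qed
qed



lemma inv_pair: "(A::complex mat) \<in> carrier_mat d d \<Longrightarrow> B \<in> carrier_mat d d \<Longrightarrow> A * B = 1\<^sub>m d \<Longrightarrow>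
  X \<in> carrier_mat d d \<Longrightarrow> A * (B * X) = X"
  by (metis assoc_mult_mat left_mult_one_mat)

lemma sq_pair: "(A::complex mat) \<in> carrier_mat d d \<Longrightarrow> A * A = B \<Longrightarrow>
  X \<in> carrier_mat d d \<Longrightarrow> A * (A * X) = B * X"
  by (metis assoc_mult_mat)

theorem mainTheorem8:
  fixes d :: nat and P Q R :: "complex mat"
  assumes "pos_def_mat d P" and "pos_def_mat d Q"
    and "R = geo_mean (mat_inv P) (mat_inv Q)"
  shows "gen_fidelity R P Q = matsumoto_fidelity P Q"
proof -
  have onel[simp]: "\<And>A::complex mat. A \<in> carrier_mat d d \<Longrightarrow> 1\<^sub>m d * A = A" by (metis carrier_matD(1) left_mult_one_mat')
  have oner[simp]: "\<And>A::complex mat. A \<in> carrier_mat d d \<Longrightarrow> A * 1\<^sub>m d = A" by (metis carrier_matD(2) right_mult_one_mat')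
  have assoc_d[simp]: "\<And>A B C::complex mat. A \<in> carrier_mat d d \<Longrightarrow> B \<in> carrier_mat d d \<Longrightarrow> C \<in> carrier_mat d d \<Longrightarrow>
    (A * B) * C = A * (B * C)" by (rule assoc_mult_mat)
  have mult_d[simp]: "\<And>A B::complex mat. A \<in> carrier_mat d d \<Longrightarrow> B \<in> carrier_mat d d \<Longrightarrow> A * B \<in> carrier_mat d d"
    by (rule mult_carrier_mat)
  note Ppd = assms(1) and Qpd = assms(2)
  have Pc[simp]: "P \<in> carrier_mat d d" and Qc[simp]: "Q \<in> carrier_mat d d" using Ppd Qpd pd_carrier by auto
  define Pi where "Pi = mat_inv P"
  define Qi where "Qi = mat_inv Q"
  note PI = mat_inv_props[OF Ppd, folded Pi_def]
  note QI = mat_inv_props[OF Qpd, folded Qi_def]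
  have Pic[simp]: "Pi \<in> carrier_mat d d" and Qic[simp]: "Qi \<in> carrier_mat d d" using PI(1) QI(1) pd_carrier by auto
  have [simp]: "\<And>X. X \<in> carrier_mat d d \<Longrightarrow> P * (Pi * X) = X" by (rule inv_pair[OF Pc Pic PI(2)])
  have [simp]: "\<And>X. X \<in> carrier_mat d d \<Longrightarrow> Pi * (P * X) = X" by (rule inv_pair[OF Pic Pc PI(3)])
  have [simp]: "\<And>X. X \<in> carrier_mat d d \<Longrightarrow> Q * (Qi * X) = X" by (rule inv_pair[OF Qc Qic QI(2)])
  have [simp]: "\<And>X. X \<in> carrier_mat d d \<Longrightarrow> Qi * (Q * X) = X" by (rule inv_pair[OF Qic Qc QI(3)])
  have [simp]: "P * Pi = 1\<^sub>m d" "Pi * P = 1\<^sub>m d" "Q * Qi = 1\<^sub>m d" "Qi * Q = 1\<^sub>m d" using PI QI by auto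
  define a where "a = mat_sqrt Pi"
  note SA = mat_sqrt_props[OF PI(1), folded a_def]
  define ai where "ai = mat_inv a"
  note AI = mat_inv_props[OF SA(1), folded ai_def]
  have ac[simp]: "a \<in> carrier_mat d d" and aic[simp]: "ai \<in> carrier_mat d d" using SA(1) AI(1) pd_carrier by auto
  have [simp]: "\<And>X. X \<in> carrier_mat d d \<Longrightarrow> a * (ai * X) = X" by (rule inv_pair[OF ac aic AI(2)])
  have [simp]: "\<And>X. X \<in> carrier_mat d d \<Longrightarrow> ai * (a * X) = X" by (rule inv_pair[OF aic ac AI(3)])
  have [simp]: "a * ai = 1\<^sub>m d" "ai * a = 1\<^sub>m d" using AI by auto
  define M0 where "M0 = ai * Qi * ai"
  have M0pd: "pos_def_mat d M0" unfolding M0_def using pd_sand[OF AI(1) QI(1)] .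
  define m where "m = mat_sqrt M0"
  note SM = mat_sqrt_props[OF M0pd, folded m_def]
  have mc[simp]: "m \<in> carrier_mat d d" using SM(1) pd_carrier by auto
  have mm: "\<And>X. X \<in> carrier_mat d d \<Longrightarrow> m * (m * X) = ai * (Qi * (ai * X))"
    using sq_pair[OF mc SM(2)] unfolding M0_def by simp
  have R_eq: "R = a * m * a" using assms(3)
    unfolding geo_mean_def Let_def a_def ai_def m_def M0_def Pi_def Qi_def by simp
  have Rpd: "pos_def_mat d R" unfolding R_eq using pd_sand[OF SA(1) SM(1)] .
  have Rc[simp]: "R \<in> carrier_mat d d" using Rpd pd_carrier by auto
  have "mat_inv Pi = P" using mat_inv_unique[OF Pic Pc] by simp
  moreover have "mat_inv Pi = ai * ai"
    using mat_inv_unique[OF Pic mult_d[OF aic aic]] SA(2)[symmetric] by simp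
  ultimately have P_eq: "P = ai * ai" by simp
  have K_RPR: "\<And>W. W \<in> carrier_mat d d \<Longrightarrow> R * (P * (R * W)) = Qi * W"
    unfolding R_eq P_eq by (simp add: mm)
  define Ri where "Ri = mat_inv R"
  note RI = mat_inv_props[OF Rpd, folded Ri_def]
  have Ric[simp]: "Ri \<in> carrier_mat d d" using RI(1) pd_carrier by auto
  have [simp]: "\<And>X. X \<in> carrier_mat d d \<Longrightarrow> R * (Ri * X) = X" by (rule inv_pair[OF Rc Ric RI(2)])
  have [simp]: "\<And>X. X \<in> carrier_mat d d \<Longrightarrow> Ri * (R * X) = X" by (rule inv_pair[OF Ric Rc RI(3)])
  have [simp]: "R * Ri = 1\<^sub>m d" "Ri * R = 1\<^sub>m d" using RI by auto
  define r where "r = mat_sqrt R"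
  note SR = mat_sqrt_props[OF Rpd, folded r_def]
  define ri where "ri = mat_inv r"
  note rI = mat_inv_props[OF SR(1), folded ri_def]
  have rc[simp]: "r \<in> carrier_mat d d" and ric[simp]: "ri \<in> carrier_mat d d" using SR(1) rI(1) pd_carrier by auto
  have [simp]: "\<And>X. X \<in> carrier_mat d d \<Longrightarrow> r * (ri * X) = X" by (rule inv_pair[OF rc ric rI(2)])
  have [simp]: "\<And>X. X \<in> carrier_mat d d \<Longrightarrow> ri * (r * X) = X" by (rule inv_pair[OF ric rc rI(3)])
  have [simp]: "r * ri = 1\<^sub>m d" "ri * r = 1\<^sub>m d" using rI by auto
  have rr: "\<And>X. X \<in> carrier_mat d d \<Longrightarrow> r * (r * X) = R * X" using sq_pair[OF rc SR(2)] .
  have Ri_eq: "Ri = ri * ri"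
    using mat_inv_unique[OF Rc mult_d[OF ric ric]] SR(2)[symmetric] unfolding Ri_def by simp
  have PRQ: "\<And>Z. Z \<in> carrier_mat d d \<Longrightarrow> P * (R * (Q * Z)) = Ri * Z"
  proof -
    fix Z :: "complex mat" assume Z: "Z \<in> carrier_mat d d"
    have "Ri * (R * (P * (R * (Q * Z)))) = Ri * (Qi * (Q * Z))" using K_RPR[of "Q * Z"] Z by simp
    then show "P * (R * (Q * Z)) = Ri * Z" using Z by simp
  qed
  define X where "X = r * P * r"
  define Y where "Y = r * Q * r"
  have Xpd: "pos_def_mat d X" unfolding X_def using pd_sand[OF SR(1) Ppd] .
  have Ypd: "pos_def_mat d Y" unfolding Y_def using pd_sand[OF SR(1) Qpd] .
  have Xc[simp]: "X \<in> carrier_mat d d" and Yc[simp]: "Y \<in> carrier_mat d d" using Xpd Ypd pd_carrier by auto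
  have XY: "X * Y = 1\<^sub>m d"
  proof -
    have "X * Y = r * (P * (R * (Q * r)))" unfolding X_def Y_def by (simp add: rr)
    also have "\<dots> = r * (Ri * r)" by (simp add: PRQ)
    also have "\<dots> = 1\<^sub>m d" unfolding Ri_eq by simp
    finally show ?thesis .
  qed
  define sx where "sx = mat_sqrt X"
  note SX = mat_sqrt_props[OF Xpd, folded sx_def]
  define sxi where "sxi = mat_inv sx"
  note sxI = mat_inv_props[OF SX(1), folded sxi_def]
  have sxc[simp]: "sx \<in> carrier_mat d d" and sxic[simp]: "sxi \<in> carrier_mat d d" using SX(1) sxI(1) pd_carrier by auto
  have [simp]: "\<And>W. W \<in> carrier_mat d d \<Longrightarrow> sx * (sxi * W) = W" by (rule inv_pair[OF sxc sxic sxI(2)])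
  have [simp]: "sx * sxi = 1\<^sub>m d" "sxi * sx = 1\<^sub>m d" using sxI by auto
  have "mat_inv X = Y" using mat_inv_unique[OF Xc Yc XY] .
  moreover have "mat_inv X = sxi * sxi"
    using mat_inv_unique[OF Xc mult_d[OF sxic sxic]] SX(2)[symmetric] by simp
  ultimately have sxisxi: "sxi * sxi = Y" by simp
  have sy: "mat_sqrt Y = sxi" using mat_sqrt_props(3)[OF Ypd pd_psd[OF sxI(1)] sxisxi] .
  have "gen_fidelity R P Q = mtrace (mat_sqrt X * mat_inv R * mat_sqrt Y)"
    unfolding gen_fidelity_def Let_def X_def Y_def r_def by simp
  also have "\<dots> = mtrace (sx * (Ri * sxi))" unfolding sx_def[symmetric] Ri_def[symmetric] sy by simp
  also have "\<dots> = mtrace ((Ri * sxi) * sx)" using mtrace_comm[OF sxc mult_d[OF Ric sxic]] .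
  also have "\<dots> = mtrace Ri" by simp
  finally have GF: "gen_fidelity R P Q = mtrace Ri" .
  have K2: "\<And>W. W \<in> carrier_mat d d \<Longrightarrow> Ri * (Pi * (Ri * W)) = Q * W"
  proof -
    fix W :: "complex mat" assume W: "W \<in> carrier_mat d d"
    have "Qi * (Ri * (Pi * (Ri * W))) = R * (P * (R * (Ri * (Pi * (Ri * W)))))"
      using K_RPR[of "Ri * (Pi * (Ri * W))"] W by simp
    also have "\<dots> = W" using W by simp
    finally have e: "Qi * (Ri * (Pi * (Ri * W))) = W" .
    have "Ri * (Pi * (Ri * W)) = Q * (Qi * (Ri * (Pi * (Ri * W))))" using W by simp
    also have "\<dots> = Q * W" unfolding e ..
    finally show "Ri * (Pi * (Ri * W)) = Q * W" .
  qed
  define b where "b = mat_sqrt P"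
  note SB = mat_sqrt_props[OF Ppd, folded b_def]
  define bi where "bi = mat_inv b"
  note bI = mat_inv_props[OF SB(1), folded bi_def]
  have bc[simp]: "b \<in> carrier_mat d d" and bic[simp]: "bi \<in> carrier_mat d d" using SB(1) bI(1) pd_carrier by auto
  have [simp]: "\<And>W. W \<in> carrier_mat d d \<Longrightarrow> b * (bi * W) = W" by (rule inv_pair[OF bc bic bI(2)])
  have [simp]: "b * bi = 1\<^sub>m d" "bi * b = 1\<^sub>m d" using bI by auto
  have "Pi = bi * bi"
    using mat_inv_unique[OF Pc mult_d[OF bic bic]] SB(2)[symmetric] unfolding Pi_def by simp
  then have bb: "\<And>W. W \<in> carrier_mat d d \<Longrightarrow> bi * (bi * W) = Pi * W" by simp
  define NQ where "NQ = bi * Q * bi"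
  have NQpd: "pos_def_mat d NQ" unfolding NQ_def using pd_sand[OF bI(1) Qpd] .
  define Z where "Z = bi * Ri * bi"
  have Zpd: "pos_def_mat d Z" unfolding Z_def using pd_sand[OF bI(1) RI(1)] .
  have ZZ: "Z * Z = NQ" unfolding Z_def NQ_def by (simp add: bb K2)
  have n_eq: "mat_sqrt NQ = Z" using mat_sqrt_props(3)[OF NQpd pd_psd[OF Zpd] ZZ] .
  have "matsumoto_fidelity P Q = mtrace (b * mat_sqrt NQ * b)"
    unfolding matsumoto_fidelity_def geo_mean_def Let_def b_def bi_def NQ_def by simp
  also have "b * mat_sqrt NQ * b = Ri" unfolding n_eq Z_def by simp
  finally show ?thesis using GF by simp
qed

end
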